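(* Let $R$ be a recursive ring and $\phi:\mathbb{Z}\to R^k$ an injection such that for every $m\ge1$ and every Diophantine subset $A\subseteq\mathbb{Z}^m$ over $\mathbb{Z}$, the image $\phi(A)=\{(\phi(a_1),\ldots,\phi(a_m)):(a_1,\ldots,a_m)\in A\}\subseteq R^{km}$ is Diophantine over $R$. Then $\phi$ is recursive (computable).
   Context: A ring $R$ is recursive if there is an injection of $R$ into $\mathbb{Z}$ with recursive image under which the ring operations correspond to recursive functions. A set $A\subseteq R^n$ is Diophantine over $R$ if there is a polynomial $p(T_1,\ldots,T_n,X_1,\ldots,X_s)$ with coefficients in $R$ such that $(t_1,\ldots,t_n)\in A$ iff $\exists x_1,\ldots,x_s\in R$ with $p(t_1,\ldots,t_n,x_1,\ldots,x_s)=0$. *)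

theory Defs
  imports Main "HOL-Library.Nat_Bijection"
begin

datatype recf = Zero | Succ | Proj nat | Comp recf "recf list" | Prim recf recf | Mini recf

inductive reval :: "recf \<Rightarrow> nat list \<Rightarrow> nat \<Rightarrow> bool" where
  reval_zero: "reval Zero xs 0"
| reval_succ: "reval Succ (x # xs) (Suc x)"
| reval_proj: "i < length xs \<Longrightarrow> reval (Proj i) xs (xs ! i)"
| reval_comp: "length ys = length gs \<Longrightarrow> (\<forall>i<length gs. reval (gs ! i) xs (ys ! i))
     \<Longrightarrow> reval f ys z \<Longrightarrow> reval (Comp f gs) xs z"
| reval_prim0: "reval f xs y \<Longrightarrow> reval (Prim f g) (0 # xs) y"
| reval_primS: "reval (Prim f g) (n # xs) y \<Longrightarrow> reval g (n # y # xs) z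
     \<Longrightarrow> reval (Prim f g) (Suc n # xs) z"
| reval_mini: "reval f (y # xs) 0 \<Longrightarrow> (\<forall>z<y. \<exists>v. 0 < v \<and> reval f (z # xs) v)
     \<Longrightarrow> reval (Mini f) xs y"

definition computable_nat :: "nat \<Rightarrow> (nat list \<Rightarrow> nat) \<Rightarrow> bool" where
  "computable_nat n f \<longleftrightarrow> (\<exists>r. \<forall>xs. length xs = n \<longrightarrow> reval r xs (f xs))"

definition computable_int :: "nat \<Rightarrow> (int list \<Rightarrow> int) \<Rightarrow> bool" where
  "computable_int n f \<longleftrightarrow> computable_nat n (\<lambda>xs. int_encode (f (map int_decode xs)))"

definition recursive_presentation :: "('a::comm_ring_1 \<Rightarrow> int) \<Rightarrow> bool" where
  "recursive_presentation iota \<longleftrightarrow>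
     inj iota
   \<and> computable_int 1 (\<lambda>xs. if xs ! 0 \<in> range iota then 1 else 0)
   \<and> (\<exists>F. computable_int 2 F \<and> (\<forall>x y. F [iota x, iota y] = iota (x + y)))
   \<and> (\<exists>G. computable_int 2 G \<and> (\<forall>x y. G [iota x, iota y] = iota (x * y)))"

datatype 'a dpoly = PConst 'a | PVar nat | PAdd "'a dpoly" "'a dpoly" | PMul "'a dpoly" "'a dpoly"

primrec peval :: "'a::comm_ring_1 dpoly \<Rightarrow> (nat \<Rightarrow> 'a) \<Rightarrow> 'a" where
  "peval (PConst c) v = c"
| "peval (PVar i) v = v i"
| "peval (PAdd p q) v = peval p v + peval q v"
| "peval (PMul p q) v = peval p v * peval q v"

definition diophantine :: "nat \<Rightarrow> 'a::comm_ring_1 list set \<Rightarrow> bool" where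
  "diophantine n A \<longleftrightarrow> A \<subseteq> {t. length t = n} \<and>
     (\<exists>p. \<forall>t. length t = n \<longrightarrow>
        (t \<in> A \<longleftrightarrow> (\<exists>x. peval p (\<lambda>i. if i < n then t ! i else x (i - n)) = 0)))"

end

theory Submission
  imports Defs "HOL-Library.Nat_Bijection"
begin


abbreviation cn where "cn \<equiv> computable_nat"

lemma cn_cong: "(\<And>xs. length xs = n \<Longrightarrow> f xs = g xs) \<Longrightarrow> cn n f \<longleftrightarrow> cn n g"
  unfolding computable_nat_def by auto

lemma cn_proj: "i < n \<Longrightarrow> cn n (\<lambda>xs. xs ! i)"
  unfolding computable_nat_def by (auto intro!: exI[of _ "Proj i"] reval_proj)

lemma cn_zero: "cn n (\<lambda>_. 0)"
  unfolding computable_nat_def by (auto intro!: exI[of _ Zero] reval_zero)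

lemma cn_list:
  assumes "\<forall>g\<in>set gs. cn n g"
  shows "\<exists>rs. length rs = length gs \<and> (\<forall>i<length gs. \<forall>xs. length xs = n \<longrightarrow> reval (rs!i) xs ((gs!i) xs))"
  using assms
proof (induction gs)
  case Nil then show ?case by auto
next
  case (Cons g gs)
  then obtain rs where rs: "length rs = length gs" "\<forall>i<length gs. \<forall>xs. length xs = n \<longrightarrow> reval (rs!i) xs ((gs!i) xs)" by auto
  from Cons obtain r where r: "\<forall>xs. length xs = n \<longrightarrow> reval r xs (g xs)" unfolding computable_nat_def by auto
  show ?case using rs r by (intro exI[of _ "r#rs"]) (auto simp: nth_Cons split: nat.splits)
qed

lemma cn_comp:
  assumes "cn (length gs) f" "\<forall>g\<in>set gs. cn n g"
  shows "cn n (\<lambda>xs. f (map (\<lambda>g. g xs) gs))"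
proof -
  obtain rs where rs: "length rs = length gs" "\<forall>i<length gs. \<forall>xs. length xs = n \<longrightarrow> reval (rs!i) xs ((gs!i) xs)"
    using cn_list[OF assms(2)] by auto
  obtain r where r: "\<forall>xs. length xs = length gs \<longrightarrow> reval r xs (f xs)" using assms(1) unfolding computable_nat_def by auto
  show ?thesis unfolding computable_nat_def
    by (rule exI[of _ "Comp r rs"]) (auto intro!: reval_comp r[rule_format] simp: rs)
qed

lemma cn_comp1: "cn 1 f \<Longrightarrow> cn n g \<Longrightarrow> cn n (\<lambda>xs. f [g xs])"
  using cn_comp[of "[g]" f n] by simp
lemma cn_comp2: "cn 2 f \<Longrightarrow> cn n g \<Longrightarrow> cn n h \<Longrightarrow> cn n (\<lambda>xs. f [g xs, h xs])"
  using cn_comp[of "[g,h]" f n] by (simp add: numeral_2_eq_2)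
lemma cn_comp3: "cn 3 f \<Longrightarrow> cn n g \<Longrightarrow> cn n h \<Longrightarrow> cn n u \<Longrightarrow> cn n (\<lambda>xs. f [g xs, h xs, u xs])"
  using cn_comp[of "[g,h,u]" f n] by (simp add: numeral_3_eq_3)

lemma cn_succ: "cn 1 (\<lambda>xs. Suc (xs!0))"
  unfolding computable_nat_def
  by (rule exI[of _ Succ]) (auto simp: length_Suc_conv intro: reval_succ)

lemma cn_const: "cn n (\<lambda>_. c)"
proof (induction c)
  case 0 show ?case by (rule cn_zero)
next
  case (Suc c) show ?case using cn_comp1[OF cn_succ Suc] by simp
qed

fun precf :: "(nat list \<Rightarrow> nat) \<Rightarrow> (nat list \<Rightarrow> nat) \<Rightarrow> nat \<Rightarrow> nat list \<Rightarrow> nat" where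
  "precf f g 0 xs = f xs"
| "precf f g (Suc m) xs = g (m # precf f g m xs # xs)"

lemma cn_prim:
  assumes "cn n f" "cn (Suc (Suc n)) g"
  shows "cn (Suc n) (\<lambda>xs. precf f g (hd xs) (tl xs))"
proof -
  obtain rf where rf: "\<forall>xs. length xs = n \<longrightarrow> reval rf xs (f xs)" using assms(1) unfolding computable_nat_def by auto
  obtain rg where rg: "\<forall>xs. length xs = Suc (Suc n) \<longrightarrow> reval rg xs (g xs)" using assms(2) unfolding computable_nat_def by auto
  have pr: "reval (Prim rf rg) (m # xs) (precf f g m xs)" if "length xs = n" for m xs
    using that
  proof (induction m)
    case 0 then show ?case by (auto intro: reval_prim0 rf[rule_format])
  next
    case (Suc m)
    have "reval rg (m # precf f g m xs # xs) (g (m # precf f g m xs # xs))"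
      using rg Suc.prems by simp
    then show ?case using reval_primS[OF Suc.IH[OF Suc.prems]] by simp
  qed
  have "\<forall>xs. length xs = Suc n \<longrightarrow> reval (Prim rf rg) xs (precf f g (hd xs) (tl xs))"
  proof (intro allI impI)
    fix xs :: "nat list" assume "length xs = Suc n"
    then obtain m ys where "xs = m # ys" "length ys = n" by (cases xs) auto
    then show "reval (Prim rf rg) xs (precf f g (hd xs) (tl xs))" using pr by simp
  qed
  then show ?thesis unfolding computable_nat_def by (rule exI)
qed

lemma cn_mini:
  assumes "cn (Suc n) f" "\<forall>xs. length xs = n \<longrightarrow> (\<exists>y. f (y#xs) = 0)"
  shows "cn n (\<lambda>xs. LEAST y. f (y#xs) = 0)"
proof -
  obtain r where r: "\<forall>xs. length xs = Suc n \<longrightarrow> reval r xs (f xs)" using assms(1) unfolding computable_nat_def by auto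
  have mr: "reval (Mini r) xs (LEAST y. f (y#xs) = 0)" if "length xs = n" for xs
  proof (rule reval_mini)
    from assms(2) that obtain y where "f (y#xs) = 0" by auto
    then have "f ((LEAST y. f (y#xs) = 0)#xs) = 0" by (rule LeastI)
    then show "reval r ((LEAST y. f (y#xs) = 0) # xs) 0" using r[rule_format, of "(LEAST y. f (y#xs) = 0) # xs"] that by simp
    show "\<forall>z<(LEAST y. f (y#xs) = 0). \<exists>v>0. reval r (z # xs) v"
    proof (intro allI impI)
      fix z assume "z < (LEAST y. f (y#xs) = 0)"
      then have "f (z#xs) \<noteq> 0" by (rule not_less_Least)
      then show "\<exists>v>0. reval r (z # xs) v" using r that by (intro exI[of _ "f (z#xs)"]) auto
    qed
  qed
  show ?thesis unfolding computable_nat_def by (rule exI[of _ "Mini r"]) (simp add: mr)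
qed



lemma len1: "length xs = 1 \<Longrightarrow> xs = [xs!0]"
  by (cases xs) auto
lemma len2: "length xs = 2 \<Longrightarrow> xs = [xs!0, xs!1]"
  by (cases xs; cases "tl xs") auto
lemma len3: "length xs = 3 \<Longrightarrow> xs = [xs!0, xs!1, xs!2]"
  by (cases xs; cases "tl xs"; cases "tl (tl xs)") auto

lemma cn_prim_cong:
  assumes "cn n f" "cn (Suc (Suc n)) g" "\<And>m xs. length xs = n \<Longrightarrow> precf f g m xs = h (m # xs)"
  shows "cn (Suc n) h"
proof -
  have c: "cn (Suc n) (\<lambda>xs. precf f g (hd xs) (tl xs))" by (rule cn_prim[OF assms(1,2)])
  have "length xs = Suc n \<Longrightarrow> precf f g (hd xs) (tl xs) = h xs" for xs
    using assms(3)[of "tl xs" "hd xs"] by (cases xs) auto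
  then have "cn (Suc n) (\<lambda>xs. precf f g (hd xs) (tl xs)) = cn (Suc n) h" by (rule cn_cong)
  with c show ?thesis by simp
qed

lemma cn_prim_cong':
  assumes "cn n f" "cn M g" "\<forall>m xs. length xs = n \<longrightarrow> precf f g m xs = h (m # xs)" "N = n + 1" "M = n + 2"
  shows "cn N h"
  using cn_prim_cong[of n f g h] assms by simp

lemma cn_add0: "cn 2 (\<lambda>xs. xs!0 + xs!1)"
  apply (rule cn_prim_cong'[where n=1 and M=3 and f="\<lambda>xs. xs!0" and g="\<lambda>xs. Suc (xs!1)"])
  subgoal by (rule cn_proj) simp
  subgoal using cn_comp1[OF cn_succ cn_proj[of 1 3]] by simp
  subgoal apply (intro allI impI) subgoal for m xs by (induction m) auto done
  by simp_all

lemma cn_pred0: "cn 1 (\<lambda>xs. xs!0 - 1)"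
  apply (rule cn_prim_cong'[where n=0 and M=2 and f="\<lambda>xs. 0" and g="\<lambda>xs. xs!0"])
  subgoal by (rule cn_zero)
  subgoal by (rule cn_proj) simp
  subgoal apply (intro allI impI) subgoal for m xs by (cases m) auto done
  by simp_all

lemma cn_subr: "cn 2 (\<lambda>xs. xs!1 - xs!0)"
  apply (rule cn_prim_cong'[where n=1 and M=3 and f="\<lambda>xs. xs!0" and g="\<lambda>xs. xs!1 - 1"])
  subgoal by (rule cn_proj) simp
  subgoal using cn_comp1[OF cn_pred0 cn_proj[of 1 3]] by simp
  subgoal apply (intro allI impI) subgoal for m xs by (induction m) auto done
  by simp_all

lemma cn_mult0: "cn 2 (\<lambda>xs. xs!0 * xs!1)"
  apply (rule cn_prim_cong'[where n=1 and M=3 and f="\<lambda>xs. 0" and g="\<lambda>xs. xs!1 + xs!2"])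
  subgoal by (rule cn_zero)
  subgoal using cn_comp2[OF cn_add0 cn_proj[of 1 3] cn_proj[of 2 3]] by simp
  subgoal apply (intro allI impI) subgoal for m xs by (induction m) auto done
  by simp_all

lemma cn_ifz0: "cn 3 (\<lambda>xs. if xs!0 = 0 then xs!2 else xs!1)"
  apply (rule cn_prim_cong'[where n=2 and M=4 and f="\<lambda>xs. xs!1" and g="\<lambda>xs. xs!2"])
  subgoal by (rule cn_proj) simp
  subgoal by (rule cn_proj) simp
  subgoal apply (intro allI impI) subgoal for m xs by (cases m) auto done
  by simp_all

lemma cn_tri0: "cn 1 (\<lambda>xs. triangle (xs!0))"
  apply (rule cn_prim_cong'[where n=0 and M=2 and f="\<lambda>xs. 0" and g="\<lambda>xs. xs!1 + Suc (xs!0)"])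
  subgoal by (rule cn_zero)
  subgoal using cn_comp2[OF cn_add0 cn_proj[of 1 2] cn_comp1[OF cn_succ cn_proj[of 0 2]]] by simp
  subgoal apply (intro allI impI) subgoal for m xs by (induction m) auto done
  by simp_all

lemma cn_par0: "cn 1 (\<lambda>xs. xs!0 mod 2)"
  apply (rule cn_prim_cong'[where n=0 and M=2 and f="\<lambda>xs. 0" and g="\<lambda>xs. 1 - xs!1"])
  subgoal by (rule cn_zero)
  subgoal using cn_comp2[OF cn_subr cn_proj[of 1 2] cn_const[of 2 1]] by simp
  subgoal apply (intro allI impI) subgoal for m xs by (induction m) (auto simp: mod_Suc) done
  by simp_all

lemma cn_half0: "cn 1 (\<lambda>xs. xs!0 div 2)"
  apply (rule cn_prim_cong'[where n=0 and M=2 and f="\<lambda>xs. 0" and g="\<lambda>xs. xs!1 + xs!0 mod 2"])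
  subgoal by (rule cn_zero)
  subgoal using cn_comp2[OF cn_add0 cn_proj[of 1 2] cn_comp1[OF cn_par0 cn_proj[of 0 2]]] by simp
  subgoal apply (intro allI impI) subgoal for m xs by (induction m) (auto simp: div_Suc mod_Suc) done
  by simp_all

lemma nth3[simp]: "[a,b,c]!2 = c" "[a,b,c]!Suc 0 = b" "[a,b,c]!0 = a"
  by simp_all

lemma cn_add[intro]: "cn n g \<Longrightarrow> cn n h \<Longrightarrow> cn n (\<lambda>xs. g xs + h xs)"
  using cn_comp2[OF cn_add0] by simp
lemma cn_sub[intro]: "cn n g \<Longrightarrow> cn n h \<Longrightarrow> cn n (\<lambda>xs. g xs - h xs)"
  using cn_comp2[OF cn_subr, of n h g] by simp
lemma cn_mult[intro]: "cn n g \<Longrightarrow> cn n h \<Longrightarrow> cn n (\<lambda>xs. g xs * h xs)"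
  using cn_comp2[OF cn_mult0] by simp
lemma cn_ifz[intro]: "cn n c \<Longrightarrow> cn n g \<Longrightarrow> cn n h \<Longrightarrow> cn n (\<lambda>xs. if c xs = 0 then g xs else h xs)"
  using cn_comp3[OF cn_ifz0, of n c h g] by (simp cong: if_cong)
lemma cn_tri[intro]: "cn n g \<Longrightarrow> cn n (\<lambda>xs. triangle (g xs))"
  using cn_comp1[OF cn_tri0] by simp
lemma cn_par[intro]: "cn n g \<Longrightarrow> cn n (\<lambda>xs. g xs mod 2)"
  using cn_comp1[OF cn_par0] by simp
lemma cn_half[intro]: "cn n g \<Longrightarrow> cn n (\<lambda>xs. g xs div 2)"
  using cn_comp1[OF cn_half0] by simp
lemma cn_suc[intro]: "cn n g \<Longrightarrow> cn n (\<lambda>xs. Suc (g xs))"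
  using cn_comp1[OF cn_succ] by simp
declare cn_const[intro]

lemma cn_ifz'[intro]: "cn n c \<Longrightarrow> cn n g \<Longrightarrow> cn n h \<Longrightarrow> cn n (\<lambda>xs. if c xs \<noteq> 0 then g xs else h xs)"
proof -
  assume a: "cn n c" "cn n g" "cn n h"
  have "(\<lambda>xs. if c xs \<noteq> 0 then g xs else h xs) = (\<lambda>xs. if c xs = 0 then h xs else g xs)" by auto
  then show ?thesis using cn_ifz[OF a(1,3,2)] by simp
qed



lemma tri_mono: "m \<le> n \<Longrightarrow> triangle m \<le> triangle n"
  by (induction n rule: dec_induct) auto

definition us :: "nat \<Rightarrow> nat" where "us n = (LEAST s. Suc n - triangle (Suc s) = 0)"
definition u1 :: "nat \<Rightarrow> nat" where "u1 n = n - triangle (us n)"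
definition u2 :: "nat \<Rightarrow> nat" where "u2 n = us n - u1 n"

lemma us_pe: "us (prod_encode (a,b)) = a + b"
proof -
  have pe: "prod_encode (a,b) = triangle (a+b) + a" by (simp add: prod_encode_def)
  show ?thesis unfolding us_def pe
proof (rule Least_equality)
  show "Suc (triangle (a + b) + a) - triangle (Suc (a + b)) = 0" by simp
  fix s assume "Suc (triangle (a + b) + a) - triangle (Suc s) = 0"
  then have "Suc (triangle (a + b) + a) \<le> triangle (Suc s)" by simp
  then show "a + b \<le> s"
  proof (rule contrapos_pp)
    assume "\<not> a + b \<le> s"
    then have "triangle (Suc s) \<le> triangle (a+b)" by (intro tri_mono) simp
    then show "\<not> Suc (triangle (a + b) + a) \<le> triangle (Suc s)" by simp
  qed
qed
qed

lemma u1_pe[simp]: "u1 (prod_encode (a,b)) = a"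
  unfolding u1_def us_pe by (simp add: prod_encode_def)
lemma u2_pe[simp]: "u2 (prod_encode (a,b)) = b"
  unfolding u2_def us_pe by simp

lemma cn_us0: "cn 1 (\<lambda>xs. us (xs!0))"
proof -
  have "cn 1 (\<lambda>xs. LEAST s. (\<lambda>ys. Suc (ys!1) - triangle (Suc (ys!0))) (s#xs) = 0)"
  proof (rule cn_mini)
    show "cn (Suc 1) (\<lambda>ys. Suc (ys ! 1) - triangle (Suc (ys ! 0)))"
      by (intro cn_sub cn_suc cn_tri cn_proj) auto
    show "\<forall>xs. length xs = 1 \<longrightarrow> (\<exists>y. Suc ((y # xs) ! 1) - triangle (Suc ((y # xs) ! 0)) = 0)"
    proof (intro allI impI)
      fix xs :: "nat list"
      have "Suc (xs!0) \<le> triangle (Suc (xs!0))" by (induction "xs!0") auto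
      then show "\<exists>y. Suc ((y # xs) ! 1) - triangle (Suc ((y # xs) ! 0)) = 0"
        by (intro exI[of _ "xs!0"]) simp
    qed
  qed
  then show ?thesis unfolding us_def by simp
qed

lemmas cn_rules = cn_add cn_sub cn_mult cn_ifz cn_ifz' cn_tri cn_par cn_half cn_suc cn_const cn_proj

lemma cn_pe[intro]: "cn n g \<Longrightarrow> cn n h \<Longrightarrow> cn n (\<lambda>xs. prod_encode (g xs, h xs))"
  unfolding prod_encode_def by (simp, intro cn_rules)
lemma cn_us[intro]: "cn n g \<Longrightarrow> cn n (\<lambda>xs. us (g xs))"
  using cn_comp1[OF cn_us0] by simp
lemma cn_u1[intro]: "cn n g \<Longrightarrow> cn n (\<lambda>xs. u1 (g xs))"
  unfolding u1_def by (intro cn_rules cn_us)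
lemma cn_u2[intro]: "cn n g \<Longrightarrow> cn n (\<lambda>xs. u2 (g xs))"
  unfolding u2_def by (intro cn_rules cn_us cn_u1)

primrec lenc :: "nat list \<Rightarrow> nat" where
  "lenc [] = 0"
| "lenc (x # xs) = prod_encode (x, lenc xs)"

fun ldec :: "nat \<Rightarrow> nat \<Rightarrow> nat" where
  "ldec 0 n = u1 n"
| "ldec (Suc t) n = ldec t (u2 n)"

lemma ldec_lenc: "t < length cs \<Longrightarrow> ldec t (lenc cs) = cs ! t"
  by (induction cs arbitrary: t) (auto simp: nth_Cons split: nat.splits)

lemma cn_ldec[intro]: "cn n g \<Longrightarrow> cn n (\<lambda>xs. ldec t (g xs))"
  by (induction t arbitrary: g) (auto intro: cn_u1 cn_u2)

lemma cn_lenc: "(\<forall>t\<in>set ts. cn n (g t)) \<Longrightarrow> cn n (\<lambda>xs. lenc (map (\<lambda>t. g t xs) ts))"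
  by (induction ts) (auto intro: cn_pe cn_const)

lemma cn_sum: "(\<forall>t<(N::nat). cn n (g t)) \<Longrightarrow> cn n (\<lambda>xs. \<Sum>t<N. g t xs)"
  by (induction N) (auto intro: cn_add cn_const)



lemma reval_mini_at:
  assumes "\<forall>xs. length xs = Suc n \<longrightarrow> reval r xs (f xs)" "length xs = n" "f (y#xs) = 0"
  shows "reval (Mini r) xs (LEAST y. f (y#xs) = 0)"
proof (rule reval_mini)
  have "f ((LEAST y. f (y#xs) = 0)#xs) = 0" using assms(3) by (rule LeastI)
  then show "reval r ((LEAST y. f (y#xs) = 0) # xs) 0" using assms(1)[rule_format, of "(LEAST y. f (y#xs) = 0) # xs"] assms(2) by simp
  show "\<forall>z<(LEAST y. f (y#xs) = 0). \<exists>v>0. reval r (z # xs) v"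
  proof (intro allI impI)
    fix z assume "z < (LEAST y. f (y#xs) = 0)"
    then have "f (z#xs) \<noteq> 0" by (rule not_less_Least)
    then show "\<exists>v>0. reval r (z # xs) v" using assms(1,2) by (intro exI[of _ "f (z#xs)"]) auto
  qed
qed

primrec pvars :: "'a dpoly \<Rightarrow> nat set" where
  "pvars (PConst c) = {}"
| "pvars (PVar i) = {i}"
| "pvars (PAdd p q) = pvars p \<union> pvars q"
| "pvars (PMul p q) = pvars p \<union> pvars q"

lemma finite_pvars: "finite (pvars p)"
  by (induction p) auto

lemma peval_cong: "(\<forall>i\<in>pvars p. v i = w i) \<Longrightarrow> peval p v = peval p w"
  by (induction p) auto

definition cd :: "('a \<Rightarrow> int) \<Rightarrow> 'a \<Rightarrow> nat" where "cd iota x = int_encode (iota x)"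
definition memc :: "('a \<Rightarrow> int) \<Rightarrow> nat \<Rightarrow> nat" where
  "memc iota c = int_encode (if int_decode c \<in> range iota then 1 else 0)"
definition Fc :: "(int list \<Rightarrow> int) \<Rightarrow> nat \<Rightarrow> nat \<Rightarrow> nat" where
  "Fc F a b = int_encode (F [int_decode a, int_decode b])"

primrec evc :: "('a::comm_ring_1 \<Rightarrow> int) \<Rightarrow> (int list \<Rightarrow> int) \<Rightarrow> (int list \<Rightarrow> int) \<Rightarrow> 'a dpoly \<Rightarrow> (nat \<Rightarrow> nat) \<Rightarrow> nat" where
  "evc iota F G (PConst c) v = cd iota c"
| "evc iota F G (PVar i) v = v i"
| "evc iota F G (PAdd p q) v = Fc F (evc iota F G p v) (evc iota F G q v)"
| "evc iota F G (PMul p q) v = Fc G (evc iota F G p v) (evc iota F G q v)"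

lemma cn_Fc:
  assumes "computable_int 2 F"
  shows "cn n g \<Longrightarrow> cn n h \<Longrightarrow> cn n (\<lambda>xs. Fc F (g xs) (h xs))"
proof -
  have "cn 2 (\<lambda>xs. int_encode (F (map int_decode xs)))" using assms unfolding computable_int_def .
  moreover have "length xs = 2 \<Longrightarrow> int_encode (F (map int_decode xs)) = Fc F (xs!0) (xs!1)" for xs
    by (subst len2, assumption) (simp add: Fc_def)
  ultimately have "cn 2 (\<lambda>xs. Fc F (xs!0) (xs!1))" using cn_cong[of 2 "\<lambda>xs. int_encode (F (map int_decode xs))" "\<lambda>xs. Fc F (xs!0) (xs!1)"] by simp
  then show "cn n g \<Longrightarrow> cn n h \<Longrightarrow> cn n (\<lambda>xs. Fc F (g xs) (h xs))"
    using cn_comp2[of "\<lambda>xs. Fc F (xs!0) (xs!1)" n g h] by simp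
qed

lemma cn_memc:
  assumes "computable_int 1 (\<lambda>xs. if xs ! 0 \<in> range iota then 1 else 0)"
  shows "cn n g \<Longrightarrow> cn n (\<lambda>xs. memc iota (g xs))"
proof -
  have "cn 1 (\<lambda>xs. int_encode ((\<lambda>xs. if xs ! 0 \<in> range iota then 1 else 0) (map int_decode xs)))"
    using assms unfolding computable_int_def .
  moreover have "length xs = 1 \<Longrightarrow> int_encode ((\<lambda>xs. if xs ! 0 \<in> range iota then 1 else 0) (map int_decode xs)) = memc iota (xs!0)" for xs
    by (subst len1, assumption) (simp add: memc_def)
  ultimately have "cn 1 (\<lambda>xs. memc iota (xs!0))" using cn_cong[of 1 "\<lambda>xs. int_encode ((\<lambda>xs. if xs ! 0 \<in> range iota then 1 else 0) (map int_decode xs))" "\<lambda>xs. memc iota (xs!0)"] by simp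
  then show "cn n g \<Longrightarrow> cn n (\<lambda>xs. memc iota (g xs))"
    using cn_comp1[of "\<lambda>xs. memc iota (xs!0)" n g] by simp
qed

lemma memc_iff: "memc iota c \<noteq> 0 \<longleftrightarrow> c \<in> range (cd iota)"
proof -
  have e1: "int_encode 1 \<noteq> 0" "int_encode 0 = 0" by (simp_all add: int_encode_def sum_encode_def)
  have "int_decode c \<in> range iota \<longleftrightarrow> c \<in> range (cd iota)"
  proof
    assume "int_decode c \<in> range iota"
    then obtain x where "int_decode c = iota x" by auto
    then have "c = int_encode (iota x)" using int_decode_inverse[of c] by simp
    then show "c \<in> range (cd iota)" unfolding cd_def by auto
  next
    assume "c \<in> range (cd iota)"
    then obtain x where "c = int_encode (iota x)" unfolding cd_def by auto
    then show "int_decode c \<in> range iota" by simp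
  qed
  then show ?thesis unfolding memc_def using e1 by auto
qed

lemma Fc_cd: "(\<forall>x y. F [iota x, iota y] = iota (f x y)) \<Longrightarrow> Fc F (cd iota x) (cd iota y) = cd iota (f x y)"
  by (simp add: Fc_def cd_def)

lemma cn_evc:
  assumes "computable_int 2 F" "computable_int 2 G" "\<forall>i. cn n (e i)"
  shows "cn n (\<lambda>xs. evc iota F G p (\<lambda>i. e i xs))"
proof (induction p)
  case (PConst x) show ?case by (simp add: cn_const)
next
  case (PVar x) show ?case using assms(3) by simp
next
  case (PAdd p q) show ?case using cn_Fc[OF assms(1) PAdd.IH] by simp
next
  case (PMul p q) show ?case using cn_Fc[OF assms(2) PMul.IH] by simp
qed

lemma evc_correct:
  assumes "\<forall>x y. F [iota x, iota y] = iota (x + y)" "\<forall>x y. G [iota x, iota y] = iota (x * y)"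
  shows "(\<forall>i\<in>pvars p. v i = cd iota (w i)) \<Longrightarrow> evc iota F G p v = cd iota (peval p w)"
proof (induction p)
  case (PConst x) show ?case by simp
next
  case (PVar x) then show ?case by simp
next
  case (PAdd p q) then show ?case using Fc_cd[of F iota "(+)"] assms(1) by simp
next
  case (PMul p q) then show ?case using Fc_cd[of G iota "(*)"] assms(2) by simp
qed



lemma cd_inj: "inj iota \<Longrightarrow> cd iota x = cd iota y \<longleftrightarrow> x = y"
  unfolding cd_def by (auto simp: int_encode_eq inj_eq)

lemma step:
  fixes iota :: "'a::comm_ring_1 \<Rightarrow> int" and phi :: "int \<Rightarrow> 'a list" and k :: nat and c :: int
  assumes inj: "inj iota" and cmem: "computable_int 1 (\<lambda>xs. if xs!0 \<in> range iota then 1 else 0)"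
   and cF: "computable_int 2 F" and Fadd: "\<forall>x y. F [iota x, iota y] = iota (x+y)"
   and cG: "computable_int 2 G" and Gmul: "\<forall>x y. G [iota x, iota y] = iota (x*y)"
   and len: "\<forall>a. length (phi a) = k" and injp: "inj phi"
   and dio: "diophantine (k*2) ((\<lambda>a. concat (map phi a)) ` {[a, a+c] | a. True})"
  shows "\<exists>rS. \<forall>a. reval rS [lenc (map (cd iota) (phi a))] (lenc (map (cd iota) (phi (a+c))))"
proof -
  define T where "T = (\<lambda>a. concat (map phi a)) ` {[a, a+c] | a. True}"
  define st where "st a = lenc (map (cd iota) (phi a))" for a
  from dio obtain p where p: "\<forall>t. length t = k*2 \<longrightarrow>
        (t \<in> T \<longleftrightarrow> (\<exists>x. peval p (\<lambda>i. if i < k*2 then t ! i else x (i - k*2)) = 0))"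
    unfolding diophantine_def T_def by blast
  define N where "N = Max (insert 0 (pvars p)) + 1 + 2*k"
  have pvN: "i \<in> pvars p \<Longrightarrow> i < N" for i
  proof -
    assume "i \<in> pvars p"
    then have "i \<le> Max (insert 0 (pvars p))" using finite_pvars by (intro Max_ge) auto
    then show ?thesis unfolding N_def by simp
  qed
  have kN: "2*k \<le> N" unfolding N_def by simp
  define fw where "fw n j i = (if i < k then ldec i n else ldec (i-k) j)" for n j i
  define z where "z = cd iota 0"
  define E where "E n j = evc iota F G p (fw n j)" for n j
  define Q where "Q xs = (\<Sum>t<N. (if memc iota (ldec t (xs!0)) \<noteq> 0 then 0 else 1)) + ((E (xs!1) (xs!0) - z) + (z - E (xs!1) (xs!0)))" for xs
  have cQ: "cn 2 Q"
  proof -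
    have c1: "cn 2 (\<lambda>xs. \<Sum>t<N. (if memc iota (ldec t (xs!0)) \<noteq> 0 then 0 else 1))"
      by (intro cn_sum allI impI cn_ifz' cn_memc[OF cmem] cn_ldec cn_proj cn_const) simp
    have "cn 2 (\<lambda>xs. evc iota F G p (\<lambda>i. fw (xs!1) (xs!0) i))"
    proof (rule cn_evc[OF cF cG], rule allI)
      fix i show "cn 2 (\<lambda>xs. fw (xs!1) (xs!0) i)"
        by (cases "i < k") (simp_all add: fw_def, (rule cn_ldec, rule cn_proj, simp)+)
    qed
    then have c2: "cn 2 (\<lambda>xs. E (xs!1) (xs!0))" unfolding E_def by simp
    have "cn 2 (\<lambda>xs. (\<Sum>t<N. (if memc iota (ldec t (xs!0)) \<noteq> 0 then 0 else 1)) + ((E (xs!1) (xs!0) - z) + (z - E (xs!1) (xs!0))))"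
      by (intro cn_add cn_sub c1 c2 cn_const)
    then show ?thesis unfolding Q_def[abs_def] .
  qed
  have Q0: "Q [j, n] = 0 \<longleftrightarrow> (\<forall>t<N. memc iota (ldec t j) \<noteq> 0) \<and> E n j = z" for j n
    unfolding Q_def by auto
  have ldst: "i < k \<Longrightarrow> ldec i (st a) = cd iota (phi a ! i)" for i a
    unfolding st_def using len by (simp add: ldec_lenc)
  have cdinj: "cd iota x = cd iota y \<longleftrightarrow> x = y" for x y using cd_inj[OF inj] .
  have lenT: "length (phi a @ phi b) = k*2" for a b using len by simp

  have ex: "\<exists>j. Q [j, st a] = 0" for a
  proof -
    define t where "t = phi a @ phi (a+c)"
    have "t \<in> T" unfolding T_def t_def by (rule image_eqI[of _ _ "[a, a+c]"]) auto
    then obtain x where x: "peval p (\<lambda>i. if i < k*2 then t ! i else x (i - k*2)) = 0"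
      using p lenT unfolding t_def by blast
    define L where "L = phi (a+c) @ map x [0..<N]"
    have lenL: "length L = k + N" unfolding L_def using len by simp
    define j0 where "j0 = lenc (map (cd iota) L)"
    have ldj: "s < k + N \<Longrightarrow> ldec s j0 = cd iota (L ! s)" for s
      unfolding j0_def using lenL by (simp add: ldec_lenc)
    have mc: "memc iota (cd iota v) \<noteq> 0" for v using memc_iff[of iota "cd iota v"] by auto
    have m: "\<forall>s<N. memc iota (ldec s j0) \<noteq> 0" using ldj mc by simp
    define W where "W i = (if i < k then phi a ! i else L ! (i-k))" for i
    have "E (st a) j0 = cd iota (peval p W)"
      unfolding E_def
    proof (rule evc_correct[OF Fadd Gmul], intro ballI)
      fix i assume "i \<in> pvars p"
      then have "i < N" by (rule pvN)
      then show "fw (st a) j0 i = cd iota (W i)"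
        unfolding fw_def W_def by (auto simp: ldst ldj)
    qed
    also have "peval p W = peval p (\<lambda>i. if i < k*2 then t ! i else x (i - k*2))"
    proof (rule peval_cong, intro ballI)
      fix i assume "i \<in> pvars p"
      then have iN: "i < N" by (rule pvN)
      show "W i = (if i < k*2 then t ! i else x (i - k*2))"
      proof (cases "i < k")
        case True then show ?thesis unfolding W_def t_def using len by (simp add: nth_append)
      next
        case False
        show ?thesis
        proof (cases "i < k*2")
          case True
          then have "i - k < k" using False by simp
          then show ?thesis unfolding W_def t_def L_def using len False True by (simp add: nth_append)
        next
          case False2: False
          have a1: "i - k - k < N" using iN by simp
          have a2: "\<not> i - k < k" "i - k - k = i - k*2" using False2 by auto
          show ?thesis unfolding W_def t_def L_def using len False False2 a1 a2
            by (simp add: nth_append)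
        qed
      qed
    qed
    finally have "E (st a) j0 = z" unfolding z_def using x by simp
    then show ?thesis using m Q0 by blast
  qed

  define out where "out j = lenc (map (\<lambda>t. ldec t j) [0..<k])" for j
  have uq: "out j = st (a+c)" if Qj: "Q [j, st a] = 0" for a j
  proof -
    from Qj Q0 have m: "\<forall>s<N. memc iota (ldec s j) \<noteq> 0" and e: "E (st a) j = z" by auto
    define dc where "dc v = (SOME x. cd iota x = v)" for v
    have dcs: "s < N \<Longrightarrow> cd iota (dc (ldec s j)) = ldec s j" for s
    proof -
      assume "s < N"
      then have "ldec s j \<in> range (cd iota)" using m memc_iff by blast
      then show ?thesis unfolding dc_def by (auto intro: someI)
    qed
    define y where "y = map (\<lambda>s. dc (ldec s j)) [0..<k]"
    define tt where "tt = phi a @ y"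
    define xx where "xx i = dc (ldec (i+k) j)" for i
    define W where "W i = (if i < k then phi a ! i else dc (ldec (i-k) j))" for i
    have "E (st a) j = cd iota (peval p W)"
      unfolding E_def
    proof (rule evc_correct[OF Fadd Gmul], intro ballI)
      fix i assume "i \<in> pvars p"
      then have "i < N" by (rule pvN)
      then show "fw (st a) j i = cd iota (W i)"
        unfolding fw_def W_def by (auto simp: ldst dcs)
    qed
    then have "peval p W = 0" using e cdinj unfolding z_def by metis
    moreover have "peval p W = peval p (\<lambda>i. if i < k*2 then tt ! i else xx (i - k*2))"
    proof (rule peval_cong, intro ballI)
      fix i assume "i \<in> pvars p"
      show "W i = (if i < k*2 then tt ! i else xx (i - k*2))"
      proof (cases "i < k")
        case True then show ?thesis unfolding W_def tt_def using len by (simp add: nth_append)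
      next
        case False
        show ?thesis
        proof (cases "i < k*2")
          case True
          then have "i - k < k" using False by simp
          then show ?thesis unfolding W_def tt_def y_def using len False True by (simp add: nth_append)
        next
          case False2: False
          have "i - k * 2 + k = i - k" using False2 by simp
          then show ?thesis unfolding W_def xx_def using False False2 by simp
        qed
      qed
    qed
    ultimately have "tt \<in> T" using p len unfolding tt_def y_def by auto
    then obtain b where b: "phi b @ phi (b+c) = phi a @ y" unfolding T_def tt_def by auto
    have "phi b = phi a" "phi (b+c) = y" using b len by (simp_all add: append_eq_append_conv)
    then have "b = a" "y = phi (a+c)" using injp by (auto dest: injD)
    have "map (\<lambda>t. ldec t j) [0..<k] = map (cd iota) (phi (a+c))"
    proof (rule nth_equalityI)
      show "length (map (\<lambda>t. ldec t j) [0..<k]) = length (map (cd iota) (phi (a + c)))" using len by simp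
      fix s assume "s < length (map (\<lambda>t. ldec t j) [0..<k])"
      then have s: "s < k" by simp
      then have "ldec s j = cd iota (y ! s)" unfolding y_def using dcs kN by simp
      then show "map (\<lambda>t. ldec t j) [0..<k] ! s = map (cd iota) (phi (a + c)) ! s"
        using s len \<open>y = phi (a+c)\<close> by simp
    qed
    then show ?thesis unfolding out_def st_def by simp
  qed

  obtain rQ where rQ: "\<forall>xs. length xs = 2 \<longrightarrow> reval rQ xs (Q xs)" using cQ unfolding computable_nat_def by auto
  have cout: "cn 1 (\<lambda>xs. out (xs!0))" unfolding out_def
    by (rule cn_lenc) (auto intro: cn_ldec cn_proj)
  obtain rO where rO: "\<forall>xs. length xs = 1 \<longrightarrow> reval rO xs (out (xs!0))" using cout unfolding computable_nat_def by auto
  have "reval (Comp rO [Mini rQ]) [st a] (st (a+c))" for a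
  proof -
    obtain j where j: "Q [j, st a] = 0" using ex by blast
    define m where "m = (LEAST j. Q (j # [st a]) = 0)"
    have r1: "reval (Mini rQ) [st a] m" unfolding m_def
      by (rule reval_mini_at[of 1]) (use rQ j in auto)
    have "Q [m, st a] = 0" unfolding m_def using j by (rule LeastI)
    then have o: "out m = st (a+c)" by (rule uq)
    have "reval rO [m] (out ([m]!0))" using rO[rule_format, of "[m]"] by simp
    then have r2: "reval rO [m] (st (a+c))" using o by simp
    show ?thesis by (rule reval_comp[where ys="[m]"]) (use r1 r2 in auto)
  qed
  then show ?thesis unfolding st_def by blast
qed



lemma dioph_shift: "diophantine 2 {[a, a+c] | a::int. True}"
  unfolding diophantine_def
proof (intro conjI)
  show "{[a, a+c] | a::int. True} \<subseteq> {t. length t = 2}" by auto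
  let ?p = "PAdd (PVar 1) (PAdd (PMul (PConst (-1)) (PVar 0)) (PConst (-c))) :: int dpoly"
  show "\<exists>p. \<forall>t. length t = 2 \<longrightarrow> (t \<in> {[a, a+c] | a::int. True} \<longleftrightarrow> (\<exists>x. peval p (\<lambda>i. if i < 2 then t ! i else x (i - 2)) = 0))"
  proof (rule exI[of _ ?p], intro allI impI)
    fix t :: "int list" assume "length t = 2"
    then have t: "t = [t!0, t!1]" by (rule len2)
    have "peval ?p (\<lambda>i. if i < 2 then t ! i else x (i - 2)) = t!1 - t!0 - c" for x by simp
    moreover have "t \<in> {[a, a+c] | a::int. True} \<longleftrightarrow> t!1 - t!0 - c = 0"
      by (subst t) auto
    ultimately show "t \<in> {[a, a+c] | a::int. True} \<longleftrightarrow> (\<exists>x. peval ?p (\<lambda>i. if i < 2 then t ! i else x (i - 2)) = 0)"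
      by (auto simp: algebra_simps)
  qed
qed

lemma iter_cn:
  assumes "\<forall>m. reval rS [h m] (h (Suc m))"
  shows "cn 1 (\<lambda>xs. h (xs!0))"
proof -
  obtain r0 where r0: "\<forall>xs. length xs = 0 \<longrightarrow> reval r0 xs (h 0)"
    using cn_const[of 0 "h 0"] unfolding computable_nat_def by auto
  have pm: "reval (Prim r0 (Comp rS [Proj 1])) [m] (h m)" for m
  proof (induction m)
    case 0 show ?case by (rule reval_prim0) (use r0 in simp)
  next
    case (Suc m)
    have "reval (Comp rS [Proj 1]) [m, h m] (h (Suc m))"
      by (rule reval_comp[where ys="[h m]"]) (auto intro: assms[rule_format] reval_proj[of 1 "[m, h m]", simplified])
    then show ?case by (rule reval_primS[OF Suc.IH])
  qed
  then have "\<forall>xs. length xs = 1 \<longrightarrow> reval (Prim r0 (Comp rS [Proj 1])) xs (h (xs!0))"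
  proof (intro allI impI)
    fix xs :: "nat list" assume "length xs = 1"
    then have "xs = [xs!0]" by (rule len1)
    then show "reval (Prim r0 (Comp rS [Proj 1])) xs (h (xs!0))" using pm[of "xs!0"] by simp
  qed
  then show ?thesis unfolding computable_nat_def by (rule exI)
qed

lemma int_decode_alt: "int_decode x = (if x mod 2 = 0 then int (x div 2) else - int (Suc (x div 2)))"
  by (auto simp: int_decode_def sum_decode_def even_iff_mod_2_eq_zero)

theorem mainTheorem9:
  fixes iota :: "'a::comm_ring_1 \<Rightarrow> int" and phi :: "int \<Rightarrow> 'a list" and k :: nat
  assumes "recursive_presentation iota"
    and "\<forall>a. length (phi a) = k"
    and "inj phi"
    and "\<forall>m\<ge>1. \<forall>A :: int list set. diophantine m A \<longrightarrow>
           diophantine (k * m) ((\<lambda>a. concat (map phi a)) ` A)"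
  shows "\<forall>i<k. computable_int 1 (\<lambda>xs. iota (phi (xs ! 0) ! i))"
proof (intro allI impI)
  fix i assume ik: "i < k"
  from assms(1) have inj: "inj iota" and cmem: "computable_int 1 (\<lambda>xs. if xs!0 \<in> range iota then 1 else 0)"
    unfolding recursive_presentation_def by auto
  from assms(1) obtain F G where cF: "computable_int 2 F" and Fadd: "\<forall>x y. F [iota x, iota y] = iota (x+y)"
    and cG: "computable_int 2 G" and Gmul: "\<forall>x y. G [iota x, iota y] = iota (x*y)"
    unfolding recursive_presentation_def by auto
  define st where "st a = lenc (map (cd iota) (phi a))" for a
  have dio: "diophantine (k*2) ((\<lambda>a. concat (map phi a)) ` {[a, a+c] | a. True})" for c
    using assms(4) dioph_shift[of c] by auto
  obtain r1 where r1: "\<forall>a. reval r1 [st a] (st (a+1))"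
    using step[OF inj cmem cF Fadd cG Gmul assms(2,3) dio[of 1]] unfolding st_def by blast
  obtain r2 where r2: "\<forall>a. reval r2 [st a] (st (a+(-1)))"
    using step[OF inj cmem cF Fadd cG Gmul assms(2,3) dio[of "-1"]] unfolding st_def by blast
  have h1: "cn 1 (\<lambda>xs. st (int (xs!0)))"
  proof (rule iter_cn[of r1], rule allI)
    fix m have "int (Suc m) = int m + 1" by simp
    then show "reval r1 [st (int m)] (st (int (Suc m)))" using r1 by metis
  qed
  have h2: "cn 1 (\<lambda>xs. st (- int (xs!0)))"
  proof (rule iter_cn[of r2], rule allI)
    fix m have "- int (Suc m) = - int m + (-1)" by simp
    then show "reval r2 [st (- int m)] (st (- int (Suc m)))" using r2 by metis
  qed
  have h1': "cn 1 (\<lambda>xs. st (int (xs!0 div 2)))"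
    using cn_comp1[OF h1 cn_half[OF cn_proj[of 0 1]]] by simp
  have h2': "cn 1 (\<lambda>xs. st (- int (Suc (xs!0 div 2))))"
    using cn_comp1[OF h2 cn_suc[OF cn_half[OF cn_proj[of 0 1]]]] by simp
  have c: "cn 1 (\<lambda>xs. ldec i (if xs!0 mod 2 = 0 then st (int (xs!0 div 2)) else st (- int (Suc (xs!0 div 2)))))"
    by (intro cn_ldec cn_ifz cn_par cn_proj h1' h2') simp
  have ldst: "ldec i (st a) = int_encode (iota (phi a ! i))" for a
    unfolding st_def using assms(2) ik by (simp add: ldec_lenc cd_def)
  have "cn 1 (\<lambda>xs. int_encode (iota (phi ((map int_decode xs) ! 0) ! i)))"
  proof -
    have "length xs = 1 \<Longrightarrow> ldec i (if xs!0 mod 2 = 0 then st (int (xs!0 div 2)) else st (- int (Suc (xs!0 div 2))))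
       = int_encode (iota (phi ((map int_decode xs) ! 0) ! i))" for xs
      by (simp add: ldst int_decode_alt)
    then have "cn 1 (\<lambda>xs. ldec i (if xs!0 mod 2 = 0 then st (int (xs!0 div 2)) else st (- int (Suc (xs!0 div 2))))) = cn 1 (\<lambda>xs. int_encode (iota (phi ((map int_decode xs) ! 0) ! i)))"
      by (rule cn_cong)
    then show ?thesis using c by simp
  qed
  then show "computable_int 1 (\<lambda>xs. iota (phi (xs ! 0) ! i))"
    unfolding computable_int_def by simp
qed

end
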